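(* Let $\psi$ be a smooth even function on $\mathbb{R}$ with $\psi(\lambda)=1$ for $-1\le\lambda\le1$ and $\operatorname{supp}\psi\subset[-2,2]$. Then there is a constant $C$ depending only on $\psi$ such that for all $t\ge1$ and all real $a$, \[ \sup_{L\ge1}\Bigl|\int_0^\infty e^{it\lambda}\sin(a\sqrt\lambda)\,\psi\Bigl(\frac{\sqrt\lambda}{L}\Bigr)\,d\lambda\Bigr|\le C\,t^{-3/2}|a| . \] *)

theory Defs
  imports "HOL-Analysis.Analysis"
begin

definition smooth_real :: "(real \<Rightarrow> real) \<Rightarrow> bool" where
  "smooth_real f \<longleftrightarrow>
     (\<exists>D :: nat \<Rightarrow> real \<Rightarrow> real. D 0 = f \<and>
        (\<forall>n x. (D n has_real_derivative D (Suc n) x) (at x)))"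

end

theory Submission
  imports Defs
begin


lemma ibp:
  fixes F f w w' :: "real \<Rightarrow> complex"
  assumes ab: "a \<le> b"
    and dF: "\<And>x. x \<in> {a..b} \<Longrightarrow> (F has_vector_derivative f x) (at x within {a..b})"
    and dw: "\<And>x. x \<in> {a..b} \<Longrightarrow> (w has_vector_derivative w' x) (at x within {a..b})"
    and cf: "continuous_on {a..b} f" and cw': "continuous_on {a..b} w'"
  shows "integral {a..b} (\<lambda>x. f x * w x) = F b * w b - F a * w a - integral {a..b} (\<lambda>x. F x * w' x)"
proof -
  have cF: "continuous_on {a..b} F"
    using dF by (meson continuous_on_eq_continuous_within has_vector_derivative_continuous)
  have cw: "continuous_on {a..b} w"
    using dw by (meson continuous_on_eq_continuous_within has_vector_derivative_continuous)
  have "((\<lambda>x. F x * w' x + f x * w x) has_integral (F b * w b - F a * w a)) {a..b}"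
    by (rule fundamental_theorem_of_calculus[OF ab]) (rule has_vector_derivative_mult[OF dF dw])
  moreover have i1: "(\<lambda>x. F x * w' x) integrable_on {a..b}"
    by (intro integrable_continuous_interval continuous_intros cF cw')
  moreover have i2: "(\<lambda>x. f x * w x) integrable_on {a..b}"
    by (intro integrable_continuous_interval continuous_intros cf cw)
  ultimately have "integral {a..b} (\<lambda>x. F x * w' x) + integral {a..b} (\<lambda>x. f x * w x) = F b * w b - F a * w a"
    using integral_add[OF i1 i2] integral_unique by metis
  then show ?thesis by (simp add: algebra_simps)
qed

lemma dE:
  fixes t :: real
  shows "((\<lambda>r. exp (\<i> * complex_of_real (t * r\<^sup>2))) has_vector_derivative
     (complex_of_real (2 * t * r) * \<i>) * exp (\<i> * complex_of_real (t * r\<^sup>2))) (at r within S)"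
proof -
  have "((\<lambda>z. exp (\<i> * (complex_of_real t * z\<^sup>2))) has_field_derivative
     (\<i> * (complex_of_real t * (2 * complex_of_real r))) * exp (\<i> * (complex_of_real t * (complex_of_real r)\<^sup>2))) (at (complex_of_real r))"
    by (auto intro!: derivative_eq_intros)
  from has_vector_derivative_real_field[OF this, of S] show ?thesis
    by (simp add: algebra_simps)
qed



lemma fres_far:
  fixes \<alpha> \<beta> :: real
  assumes ab: "\<alpha> \<le> \<beta>" and side: "1 \<le> \<alpha> \<or> \<beta> \<le> -1"
  shows "norm (integral {\<alpha>..\<beta>} (\<lambda>u. exp (\<i> * complex_of_real (u\<^sup>2)))) \<le> 2"
proof -
  have nz: "u \<in> {\<alpha>..\<beta>} \<Longrightarrow> u \<noteq> 0 \<and> 1 \<le> \<bar>u\<bar>" for u using side ab by auto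
  define e where "e = (\<lambda>u::real. exp (\<i> * complex_of_real (u\<^sup>2)))"
  define f where "f = (\<lambda>u::real. complex_of_real (2 * u) * \<i> * e u)"
  define w where "w = (\<lambda>u::real. - \<i> / (2 * complex_of_real u))"
  define w' where "w' = (\<lambda>u::real. \<i> / (2 * (complex_of_real u)\<^sup>2))"
  have ne: "norm (e u) = 1" for u unfolding e_def by (simp add: norm_exp_i_times)
  have dF: "(e has_vector_derivative f x) (at x within {\<alpha>..\<beta>})" for x
    using dE[of 1 x "{\<alpha>..\<beta>}"] unfolding e_def f_def by simp
  have dw: "(w has_vector_derivative w' x) (at x within {\<alpha>..\<beta>})" if x: "x \<in> {\<alpha>..\<beta>}" for x
  proof -
    have "((\<lambda>z. - \<i> / (2 * z)) has_field_derivative \<i> / (2 * (complex_of_real x)\<^sup>2)) (at (complex_of_real x))"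
      using nz[OF x] by (auto intro!: derivative_eq_intros simp: field_simps power2_eq_square)
    from has_vector_derivative_real_field[OF this] show ?thesis unfolding w_def w'_def by simp
  qed
  have cf: "continuous_on {\<alpha>..\<beta>} f" unfolding f_def e_def by (intro continuous_intros)
  have cw': "continuous_on {\<alpha>..\<beta>} w'" unfolding w'_def using nz by (intro continuous_intros) auto
  have "integral {\<alpha>..\<beta>} e = integral {\<alpha>..\<beta>} (\<lambda>x. f x * w x)"
    by (rule integral_cong) (use nz in \<open>auto simp: f_def w_def field_simps\<close>)
  also have "\<dots> = e \<beta> * w \<beta> - e \<alpha> * w \<alpha> - integral {\<alpha>..\<beta>} (\<lambda>x. e x * w' x)"
    by (rule ibp[OF ab dF dw cf cw'])
  finally have eq: "integral {\<alpha>..\<beta>} e = e \<beta> * w \<beta> - e \<alpha> * w \<alpha> - integral {\<alpha>..\<beta>} (\<lambda>x. e x * w' x)" .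
  have nw: "norm (w u) = 1 / (2 * \<bar>u\<bar>)" for u unfolding w_def by (simp add: norm_divide norm_mult)
  have b1: "norm (e \<beta> * w \<beta>) \<le> 1/2" using nz[of \<beta>] ab by (simp add: norm_mult ne nw)
  have b2: "norm (e \<alpha> * w \<alpha>) \<le> 1/2" using nz[of \<alpha>] ab by (simp add: norm_mult ne nw)
  have dG: "((\<lambda>u. - 1 / (2 * u)) has_vector_derivative 1 / (2 * u\<^sup>2)) (at u within {\<alpha>..\<beta>})"
    if "u \<in> {\<alpha>..\<beta>}" for u
    using nz[OF that] unfolding has_real_derivative_iff_has_vector_derivative[symmetric]
    by (auto intro!: derivative_eq_intros simp: field_simps power2_eq_square)
  have G: "((\<lambda>u. 1 / (2 * u\<^sup>2)) has_integral (- 1 / (2 * \<beta>) - - 1 / (2 * \<alpha>))) {\<alpha>..\<beta>}"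
    by (rule fundamental_theorem_of_calculus[OF ab dG])
  have "norm (integral {\<alpha>..\<beta>} (\<lambda>x. e x * w' x)) \<le> integral {\<alpha>..\<beta>} (\<lambda>u. 1 / (2 * u\<^sup>2))"
  proof (rule integral_norm_bound_integral)
    show "(\<lambda>x. e x * w' x) integrable_on {\<alpha>..\<beta>}"
      unfolding e_def by (intro integrable_continuous_interval continuous_intros cw')
    show "(\<lambda>u. 1 / (2 * u\<^sup>2)) integrable_on {\<alpha>..\<beta>}" using G by blast
    show "norm (e x * w' x) \<le> 1 / (2 * x\<^sup>2)" if "x \<in> {\<alpha>..\<beta>}" for x
      using nz[OF that] by (simp add: norm_mult ne w'_def norm_divide norm_power)
  qed
  also have "\<dots> = - 1 / (2 * \<beta>) - - 1 / (2 * \<alpha>)" using G by (rule integral_unique)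
  also have "\<dots> \<le> 1"
  proof (cases "1 \<le> \<alpha>")
    case True
    then have "1 / (2 * \<alpha>) \<le> 1/2" by (intro divide_left_mono) auto
    moreover have "0 \<le> 1 / (2 * \<beta>)" using True ab by simp
    moreover have "- 1 / (2 * \<beta>) = - (1 / (2 * \<beta>))" "- 1 / (2 * \<alpha>) = - (1 / (2 * \<alpha>))" by simp_all
    ultimately show ?thesis by linarith
  next
    case False
    then have b: "\<beta> \<le> -1" using side by auto
    then have "1 / (2 * (-\<beta>)) \<le> 1/2" by (intro divide_left_mono) auto
    moreover have "1 / (2 * \<alpha>) \<le> 0" using b ab by (simp add: divide_le_0_iff)
    moreover have "- 1 / (2 * \<beta>) = 1 / (2 * (-\<beta>))" "- 1 / (2 * \<alpha>) = - (1 / (2 * \<alpha>))" by simp_all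
    ultimately show ?thesis by linarith
  qed
  finally have b3: "norm (integral {\<alpha>..\<beta>} (\<lambda>x. e x * w' x)) \<le> 1" .
  have "norm (integral {\<alpha>..\<beta>} e) \<le> norm (e \<beta> * w \<beta>) + norm (e \<alpha> * w \<alpha>) + norm (integral {\<alpha>..\<beta>} (\<lambda>x. e x * w' x))"
    unfolding eq by (meson norm_triangle_ineq4 add_mono order_trans order_refl)
  with b1 b2 b3 show ?thesis unfolding e_def by linarith
qed



lemma fres_all:
  fixes p q :: real
  assumes pq: "p \<le> q"
  shows "norm (integral {p..q} (\<lambda>u. exp (\<i> * complex_of_real (u\<^sup>2)))) \<le> 6"
proof -
  define e where "e = (\<lambda>u::real. exp (\<i> * complex_of_real (u\<^sup>2)))"
  define c1 where "c1 = min q (max p (-1))"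
  define c2 where "c2 = min q (max p 1)"
  have o: "p \<le> c1" "c1 \<le> c2" "c2 \<le> q" using pq unfolding c1_def c2_def by auto
  have ie: "e integrable_on {a..b}" for a b unfolding e_def
    by (intro integrable_continuous_interval continuous_intros)
  have split: "integral {p..q} e = integral {p..c1} e + integral {c1..c2} e + integral {c2..q} e"
    using Henstock_Kurzweil_Integration.integral_combine[OF o(1) _ ie, of q] Henstock_Kurzweil_Integration.integral_combine[OF o(2) o(3) ie]
      o by (metis add.assoc order_trans)
  have n1: "norm (integral {p..c1} e) \<le> 2"
  proof (cases "p = c1")
    case True then show ?thesis by simp
  next
    case False
    then have "c1 \<le> -1" unfolding c1_def using pq by (auto simp: min_def max_def split: if_splits)
    then show ?thesis unfolding e_def by (intro fres_far o(1)) auto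
  qed
  have n3: "norm (integral {c2..q} e) \<le> 2"
  proof (cases "c2 = q")
    case True then show ?thesis by simp
  next
    case False
    then have "1 \<le> c2" unfolding c2_def using pq by (auto simp: min_def max_def split: if_splits)
    then show ?thesis unfolding e_def by (intro fres_far o(3)) auto
  qed
  have "norm (integral {c1..c2} e) \<le> 1 * (c2 - c1)"
    by (rule integral_bound[OF o(2)]) (auto simp: e_def norm_exp_i_times intro!: continuous_intros)
  also have "\<dots> \<le> 2" unfolding c1_def c2_def by auto
  finally have n2: "norm (integral {c1..c2} e) \<le> 2" .
  have "norm (integral {p..q} e) \<le> norm (integral {p..c1} e) + norm (integral {c1..c2} e) + norm (integral {c2..q} e)"
    unfolding split by (meson norm_triangle_ineq add_mono order_trans order_refl)
  with n1 n2 n3 show ?thesis unfolding e_def by linarith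
qed

lemma fres_quad:
  fixes t c r :: real
  assumes t: "0 < t" and r: "0 \<le> r"
  shows "norm (integral {0..r} (\<lambda>v. exp (\<i> * complex_of_real (t * v\<^sup>2 + c * v)))) \<le> 6 / sqrt t"
proof -
  define e where "e = (\<lambda>u::real. exp (\<i> * complex_of_real (u\<^sup>2)))"
  define h where "h = (\<lambda>v::real. exp (\<i> * complex_of_real (t * v\<^sup>2 + c * v)))"
  define g where "g = (\<lambda>v::real. sqrt t * (v + c / (2 * t)))"
  define K where "K = complex_of_real (sqrt t) * exp (\<i> * complex_of_real (c\<^sup>2 / (4 * t)))"
  have st: "0 < sqrt t" "sqrt t * sqrt t = t" using t by auto
  have mono: "g x \<le> g y" if "x \<le> y" for x y unfolding g_def using st that by (simp add: mult_left_mono)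
  have sub: "((\<lambda>v. sqrt t *\<^sub>R e (g v)) has_integral integral {g 0..g r} e) {0..r}"
  proof (rule has_integral_substitution[where c = "g 0" and d = "g r"])
    show "0 \<le> r" by (rule r)
    show "g 0 \<le> g r" by (rule mono[OF r])
    show "g ` {0..r} \<subseteq> {g 0..g r}" using mono by auto
    show "continuous_on {g 0..g r} e" unfolding e_def by (intro continuous_intros)
    show "(g has_real_derivative sqrt t) (at x within {0..r})" for x
      unfolding g_def by (auto intro!: derivative_eq_intros)
  qed
  have eq: "sqrt t *\<^sub>R e (g v) = K * h v" for v
  proof -
    have "(g v)\<^sup>2 = t * v\<^sup>2 + c * v + c\<^sup>2 / (4 * t)"
      unfolding g_def power2_eq_square using st t by (simp add: field_simps)
    then show ?thesis unfolding e_def K_def h_def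
      by (simp add: scaleR_conv_of_real algebra_simps flip: exp_add)
  qed
  have "integral {0..r} (\<lambda>v. K * h v) = integral {g 0..g r} e"
    using sub unfolding eq by (rule integral_unique)
  then have "K * integral {0..r} h = integral {g 0..g r} e" by simp
  moreover have "norm K = sqrt t" unfolding K_def using st by (simp add: norm_mult norm_exp_i_times)
  ultimately have "sqrt t * norm (integral {0..r} h) \<le> 6"
    using fres_all[OF mono[OF r]] unfolding e_def by (metis norm_mult)
  then show ?thesis unfolding h_def using st by (simp add: field_simps)
qed



lemma partA:
  fixes \<psi> \<psi>1 :: "real \<Rightarrow> real" and t L c M1 :: real
  assumes t: "0 < t" and L: "0 < L"
    and d\<psi>: "\<And>x. (\<psi> has_real_derivative \<psi>1 x) (at x)"
    and c1: "continuous_on UNIV \<psi>1"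
    and z3: "\<psi> 3 = 0"
    and M1: "\<And>x. x \<in> {0..3} \<Longrightarrow> \<bar>\<psi>1 x\<bar> \<le> M1"
  shows "norm (integral {0..3*L} (\<lambda>r. exp (\<i> * complex_of_real (t * r\<^sup>2 + c * r)) * complex_of_real (\<psi> (r / L))))
          \<le> 18 * M1 / sqrt t"
proof -
  define h where "h = (\<lambda>r::real. exp (\<i> * complex_of_real (t * r\<^sup>2 + c * r)))"
  define F where "F = (\<lambda>r. integral {0..r} h)"
  define w where "w = (\<lambda>r. complex_of_real (\<psi> (r / L)))"
  define w' where "w' = (\<lambda>r. complex_of_real (\<psi>1 (r / L) / L))"
  have ab: "0 \<le> 3 * L" using L by simp
  have ch: "continuous_on {0..3*L} h" unfolding h_def by (intro continuous_intros)
  have dF: "(F has_vector_derivative h x) (at x within {0..3*L})" if "x \<in> {0..3*L}" for x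
  proof -
    have "((\<lambda>u. integral {0..u} h) has_vector_derivative h x) (at x within {0..3*L})"
      by (rule integral_has_vector_derivative[OF ch that])
    then show ?thesis unfolding F_def .
  qed
  have dw: "(w has_vector_derivative w' x) (at x within {0..3*L})" for x
  proof -
    have "((\<lambda>r. \<psi> (r / L)) has_real_derivative \<psi>1 (x / L) * (1 / L)) (at x)"
      by (rule DERIV_chain2[OF d\<psi>]) (use L in \<open>auto intro!: derivative_eq_intros\<close>)
    then have "((\<lambda>r. \<psi> (r / L)) has_real_derivative \<psi>1 (x / L) / L) (at x within {0..3*L})"
      by (simp add: has_field_derivative_at_within)
    from has_vector_derivative_of_real[OF this] show ?thesis unfolding w_def w'_def .
  qed
  have cw': "continuous_on {0..3*L} w'" unfolding w'_def
    by (intro continuous_intros continuous_on_compose2[OF c1]) (use L in auto)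
  have cF: "continuous_on {0..3*L} F"
    using dF by (meson continuous_on_eq_continuous_within has_vector_derivative_continuous)
  have "integral {0..3*L} (\<lambda>x. h x * w x) = F (3*L) * w (3*L) - F 0 * w 0 - integral {0..3*L} (\<lambda>x. F x * w' x)"
    by (rule ibp[OF ab dF dw ch cw'])
  also have "F (3*L) * w (3*L) = 0" unfolding w_def using L z3 by simp
  also have "F 0 = 0" unfolding F_def by simp
  finally have eq: "integral {0..3*L} (\<lambda>x. h x * w x) = - integral {0..3*L} (\<lambda>x. F x * w' x)" by simp
  have "norm (integral {0..3*L} (\<lambda>x. F x * w' x)) \<le> (6 / sqrt t * (M1 / L)) * (3*L - 0)"
  proof (rule integral_bound[OF ab])
    show "continuous_on {0..3*L} (\<lambda>x. F x * w' x)" by (intro continuous_intros cF cw')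
    fix x assume x: "x \<in> {0..3*L}"
    have "norm (F x) \<le> 6 / sqrt t" unfolding F_def h_def using x t by (intro fres_quad) auto
    moreover have "norm (w' x) \<le> M1 / L"
    proof -
      have "x / L \<in> {0..3}" using x L by (auto simp: field_simps)
      then have "\<bar>\<psi>1 (x / L)\<bar> \<le> M1" by (rule M1)
      then show ?thesis unfolding w'_def norm_of_real using L by (simp add: abs_div divide_right_mono)
    qed
    ultimately show "norm (F x * w' x) \<le> 6 / sqrt t * (M1 / L)"
      unfolding norm_mult using t by (intro mult_mono) auto
  qed
  also have "\<dots> = 18 * M1 / sqrt t" using L by (simp add: field_simps)
  finally show ?thesis using eq unfolding h_def w_def by simp
qed



lemma partB:
  fixes \<psi>1 \<psi>2 :: "real \<Rightarrow> real" and t L a M1 M2 :: real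
  assumes t: "0 < t" and L: "1 \<le> L"
    and d\<psi>1: "\<And>x. (\<psi>1 has_real_derivative \<psi>2 x) (at x)"
    and c2: "continuous_on UNIV \<psi>2"
    and z3: "\<psi>1 3 = 0"
    and zs: "\<And>x. 0 \<le> x \<Longrightarrow> x \<le> 1/2 \<Longrightarrow> \<psi>1 x = 0"
    and M1: "\<And>x. x \<in> {0..3} \<Longrightarrow> \<bar>\<psi>1 x\<bar> \<le> M1"
    and M2: "\<And>x. x \<in> {0..3} \<Longrightarrow> \<bar>\<psi>2 x\<bar> \<le> M2"
  shows "norm (integral {0..3*L} (\<lambda>r. exp (\<i> * complex_of_real (t * r\<^sup>2)) * complex_of_real (sin (a * r) * \<psi>1 (r / L) / L)))
          \<le> 5/2 * \<bar>a\<bar> * (2 * M1 + M2) / t"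
proof -
  have L0: "0 < L" using L by simp
  have c1: "continuous_on UNIV \<psi>1"
    using d\<psi>1 by (meson DERIV_isCont continuous_at_imp_continuous_on)
  define E where "E = (\<lambda>r::real. exp (\<i> * complex_of_real (t * r\<^sup>2)))"
  define k where "k = (\<lambda>r. E r * complex_of_real (sin (a * r) * \<psi>1 (r / L) / L))"
  define c0 where "c0 = - \<i> / complex_of_real t"
  define F where "F = (\<lambda>r. E r * c0)"
  define f where "f = (\<lambda>r. complex_of_real (2 * t * r) * \<i> * E r * c0)"
  define wr where "wr = (\<lambda>r. sin (a * r) * \<psi>1 (r / L) / (2 * L * r))"
  define T1 where "T1 = (\<lambda>r. a * cos (a * r) * \<psi>1 (r / L) / (2 * L * r))"
  define T2 where "T2 = (\<lambda>r. sin (a * r) * \<psi>2 (r / L) / (2 * L * L * r))"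
  define T3 where "T3 = (\<lambda>r. sin (a * r) * \<psi>1 (r / L) / (2 * L * r\<^sup>2))"
  define w where "w = (\<lambda>r. complex_of_real (wr r))"
  define w' where "w' = (\<lambda>r. complex_of_real (T1 r + T2 r - T3 r))"
  let ?a = "L / 2" and ?b = "3 * L"
  have ab: "?a \<le> ?b" "0 \<le> ?a" using L by auto
  have ck: "continuous_on {0..?b} k" unfolding k_def E_def
    by (intro continuous_intros continuous_on_compose2[OF c1]) (use L0 in auto)
  have "integral {0..?a} k + integral {?a..?b} k = integral {0..?b} k"
    by (rule Henstock_Kurzweil_Integration.integral_combine[OF ab(2) ab(1)])
       (rule integrable_continuous_interval[OF ck])
  moreover have "integral {0..?a} k = 0"
  proof -
    have "integral {0..?a} k = integral {0..?a} (\<lambda>_. 0)"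
      by (rule integral_cong) (use L0 in \<open>auto simp: k_def intro!: zs\<close>)
    then show ?thesis by simp
  qed
  ultimately have split: "integral {0..?b} k = integral {?a..?b} k" by simp
  have dF: "(F has_vector_derivative f x) (at x within {?a..?b})" for x
    using has_vector_derivative_mult[OF dE[of t x "{?a..?b}"] has_vector_derivative_const[of c0]]
    unfolding F_def f_def E_def by simp
  have pos: "x \<in> {?a..?b} \<Longrightarrow> 0 < x" for x using L0 by auto
  have dw: "(w has_vector_derivative w' x) (at x within {?a..?b})" if x: "x \<in> {?a..?b}" for x
  proof -
    have d1: "((\<lambda>r. \<psi>1 (r / L)) has_real_derivative \<psi>2 (x / L) * (1 / L)) (at x)"
      by (rule DERIV_chain2[OF d\<psi>1]) (use L0 in \<open>auto intro!: derivative_eq_intros\<close>)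
    have "(wr has_real_derivative T1 x + T2 x - T3 x) (at x)"
      unfolding wr_def T1_def T2_def T3_def
      using pos[OF x] L0
      by (auto intro!: derivative_eq_intros d1 simp: field_simps power2_eq_square)
    then have "(wr has_real_derivative T1 x + T2 x - T3 x) (at x within {?a..?b})"
      by (simp add: has_field_derivative_at_within)
    from has_vector_derivative_of_real[OF this] show ?thesis unfolding w_def w'_def .
  qed
  have cf: "continuous_on {?a..?b} f" unfolding f_def E_def by (intro continuous_intros)
  have cw': "continuous_on {?a..?b} w'" unfolding w'_def T1_def T2_def T3_def
    using pos L0 by (intro continuous_intros continuous_on_compose2[OF c1] continuous_on_compose2[OF c2]) auto
  have "integral {?a..?b} k = integral {?a..?b} (\<lambda>x. f x * w x)"
  proof (rule integral_cong)
    fix x assume x: "x \<in> {?a..?b}"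
    show "k x = f x * w x"
      unfolding k_def f_def w_def wr_def c0_def using pos[OF x] t L0
      by (simp add: field_simps)
  qed
  also have "\<dots> = F ?b * w ?b - F ?a * w ?a - integral {?a..?b} (\<lambda>x. F x * w' x)"
    by (rule ibp[OF ab(1) dF dw cf cw'])
  also have "F ?b * w ?b = 0" unfolding w_def wr_def using L0 z3 by simp
  also have "F ?a * w ?a = 0" unfolding w_def wr_def using L0 zs[of "1/2"] by simp
  finally have eq: "integral {?a..?b} k = - integral {?a..?b} (\<lambda>x. F x * w' x)" by simp
  have nF: "norm (F x) = 1 / t" for x
    unfolding F_def E_def c0_def using t by (simp add: norm_mult norm_exp_i_times norm_divide)
  have bw: "norm (w' x) \<le> \<bar>a\<bar> * (2 * M1 + M2) / L\<^sup>2" if x: "x \<in> {?a..?b}" for x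
  proof -
    have xp: "0 < x" "L\<^sup>2 \<le> 2 * L * x" "x \<le> 3 * L" using x L0 by (auto simp: power2_eq_square)
    have xL: "x / L \<in> {0..3}" using xp L0 by (auto simp: field_simps)
    have m1: "\<bar>\<psi>1 (x / L)\<bar> \<le> M1" and m2: "\<bar>\<psi>2 (x / L)\<bar> \<le> M2" using M1[OF xL] M2[OF xL] by auto
    have M1p: "0 \<le> M1" using m1 by linarith
    have sa: "\<bar>sin (a * x)\<bar> \<le> \<bar>a\<bar> * x" using abs_sin_x_le_abs_x[of "a * x"] xp by (simp add: abs_mult)
    have "\<bar>T1 x\<bar> = \<bar>a * cos (a * x) * \<psi>1 (x / L)\<bar> / (2 * L * x)"
      unfolding T1_def using xp L0 by (simp add: abs_div)
    also have "\<dots> \<le> (\<bar>a\<bar> * M1) / L\<^sup>2"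
    proof (rule frac_le)
      show "\<bar>a * cos (a * x) * \<psi>1 (x / L)\<bar> \<le> \<bar>a\<bar> * M1"
        unfolding abs_mult by (intro mult_mono m1) (auto intro: mult_left_le)
    qed (use xp L0 M1p in auto)
    finally have t1: "\<bar>T1 x\<bar> \<le> \<bar>a\<bar> * M1 / L\<^sup>2" .
    have "\<bar>T2 x\<bar> = \<bar>sin (a * x)\<bar> * \<bar>\<psi>2 (x / L)\<bar> / (2 * L * L * x)"
      unfolding T2_def using xp L0 by (simp add: abs_div abs_mult)
    also have "\<dots> \<le> (\<bar>a\<bar> * x * M2) / (2 * L * L * x)"
      by (intro divide_right_mono mult_mono sa m2) (use xp L0 in auto)
    also have "\<dots> = \<bar>a\<bar> * M2 / (2 * L\<^sup>2)" using xp L0 by (simp add: field_simps power2_eq_square)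
    also have "\<dots> \<le> \<bar>a\<bar> * M2 / L\<^sup>2"
      by (intro divide_left_mono) (use L0 m2 in auto)
    finally have t2: "\<bar>T2 x\<bar> \<le> \<bar>a\<bar> * M2 / L\<^sup>2" .
    have "\<bar>T3 x\<bar> = \<bar>sin (a * x)\<bar> * \<bar>\<psi>1 (x / L)\<bar> / (2 * L * x\<^sup>2)"
      unfolding T3_def using xp L0 by (simp add: abs_div abs_mult)
    also have "\<dots> \<le> (\<bar>a\<bar> * x * M1) / (2 * L * x\<^sup>2)"
      by (intro divide_right_mono mult_mono sa m1) (use xp L0 in auto)
    also have "\<dots> = (\<bar>a\<bar> * M1) / (2 * L * x)" using xp L0 by (simp add: field_simps power2_eq_square)
    also have "\<dots> \<le> (\<bar>a\<bar> * M1) / L\<^sup>2"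
      by (rule frac_le) (use xp L0 M1p in auto)
    finally have t3: "\<bar>T3 x\<bar> \<le> \<bar>a\<bar> * M1 / L\<^sup>2" .
    have "norm (w' x) = \<bar>T1 x + T2 x - T3 x\<bar>" unfolding w'_def norm_of_real ..
    also have "\<dots> \<le> \<bar>T1 x\<bar> + \<bar>T2 x\<bar> + \<bar>T3 x\<bar>" by linarith
    also have "\<dots> \<le> \<bar>a\<bar> * M1 / L\<^sup>2 + \<bar>a\<bar> * M2 / L\<^sup>2 + \<bar>a\<bar> * M1 / L\<^sup>2" using t1 t2 t3 by linarith
    also have "\<dots> = \<bar>a\<bar> * (2 * M1 + M2) / L\<^sup>2" using L0 by (simp add: field_simps)
    finally show ?thesis .
  qed
  have cF: "continuous_on {?a..?b} F" unfolding F_def E_def by (intro continuous_intros)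
  have "norm (integral {?a..?b} (\<lambda>x. F x * w' x)) \<le> (1 / t * (\<bar>a\<bar> * (2 * M1 + M2) / L\<^sup>2)) * (?b - ?a)"
  proof (rule integral_bound[OF ab(1)])
    show "continuous_on {?a..?b} (\<lambda>x. F x * w' x)" by (intro continuous_intros cF cw')
    fix x assume x: "x \<in> {?a..?b}"
    show "norm (F x * w' x) \<le> 1 / t * (\<bar>a\<bar> * (2 * M1 + M2) / L\<^sup>2)"
      unfolding norm_mult nF by (rule mult_left_mono[OF bw[OF x]]) (use t in auto)
  qed
  also have "\<dots> = 5/2 * \<bar>a\<bar> * (2 * M1 + M2) / t / L" using L0 t by (simp add: field_simps power2_eq_square)
  also have "\<dots> \<le> 5/2 * \<bar>a\<bar> * (2 * M1 + M2) / t"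
  proof -
    have "0 \<le> M1" "0 \<le> M2" using M1[of 0] M2[of 0] by auto
    then have X: "0 \<le> 5/2 * \<bar>a\<bar> * (2 * M1 + M2) / t" using t by simp
    have "5/2 * \<bar>a\<bar> * (2 * M1 + M2) / t / L \<le> 5/2 * \<bar>a\<bar> * (2 * M1 + M2) / t / 1"
      by (rule divide_left_mono[OF L X]) (use L in auto)
    then show ?thesis by simp
  qed
  finally show ?thesis using eq split unfolding k_def E_def by simp
qed



lemma mainbound:
  fixes \<psi> \<psi>1 \<psi>2 :: "real \<Rightarrow> real" and t L a M1 M2 :: real
  assumes t: "1 \<le> t" and L: "1 \<le> L"
    and d\<psi>: "\<And>x. (\<psi> has_real_derivative \<psi>1 x) (at x)"
    and d\<psi>1: "\<And>x. (\<psi>1 has_real_derivative \<psi>2 x) (at x)"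
    and c2: "continuous_on UNIV \<psi>2"
    and zbig: "\<And>x. 2 < x \<Longrightarrow> \<psi> x = 0"
    and z13: "\<psi>1 3 = 0"
    and zs: "\<And>x. 0 \<le> x \<Longrightarrow> x \<le> 1/2 \<Longrightarrow> \<psi>1 x = 0"
    and M1: "\<And>x. x \<in> {0..3} \<Longrightarrow> \<bar>\<psi>1 x\<bar> \<le> M1"
    and M2: "\<And>x. x \<in> {0..3} \<Longrightarrow> \<bar>\<psi>2 x\<bar> \<le> M2"
  shows "norm (integral {0..} (\<lambda>s::real. exp (\<i> * complex_of_real (t * s))
                    * complex_of_real (sin (a * sqrt s) * \<psi> (sqrt s / L))))
         \<le> (23 * M1 + 3 * M2) * t powr (-3/2) * \<bar>a\<bar>"
proof -
  have L0: "0 < L" and t0: "0 < t" using L t by auto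
  have c0\<psi>: "continuous_on UNIV \<psi>"
    using d\<psi> by (meson DERIV_isCont continuous_at_imp_continuous_on)
  have c1: "continuous_on UNIV \<psi>1"
    using d\<psi>1 by (meson DERIV_isCont continuous_at_imp_continuous_on)
  have z3: "\<psi> 3 = 0" by (rule zbig) simp
  have M1p: "0 \<le> M1" and M2p: "0 \<le> M2" using M1[of 0] M2[of 0] by auto
  define R where "R = 3 * L"
  have R0: "0 \<le> R" using L0 unfolding R_def by simp
  define f where "f = (\<lambda>s::real. exp (\<i> * complex_of_real (t * s))
                    * complex_of_real (sin (a * sqrt s) * \<psi> (sqrt s / L)))"
  have step1: "integral {0..} f = integral {0..R\<^sup>2} f"
  proof -
    have "integral {0..} f = integral {0..} (\<lambda>x. if x \<in> {0..R\<^sup>2} then f x else 0)"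
    proof (rule integral_cong)
      fix x :: real assume x: "x \<in> {0..}"
      show "f x = (if x \<in> {0..R\<^sup>2} then f x else 0)"
      proof (cases "x \<le> R\<^sup>2")
        case False
        then have "sqrt (R\<^sup>2) < sqrt x" by (simp del: real_sqrt_abs)
        then have "R < sqrt x" using R0 by simp
        then have "2 < sqrt x / L" using L0 unfolding R_def by (simp add: field_simps)
        then show ?thesis using False unfolding f_def by (simp add: zbig)
      qed (use x in auto)
    qed
    also have "\<dots> = integral ({0..R\<^sup>2} \<inter> {0..}) f" by (rule integral_restrict_Int)
    also have "{0..R\<^sup>2} \<inter> {0..} = {0..R\<^sup>2}" by auto
    finally show ?thesis .
  qed
  have sub: "((\<lambda>r. (2 * r) *\<^sub>R f (r\<^sup>2)) has_integral integral {0\<^sup>2..R\<^sup>2} f) {0..R}"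
  proof (rule has_integral_substitution)
    show "0 \<le> R" by (rule R0)
    show "(0::real)\<^sup>2 \<le> R\<^sup>2" by simp
    show "(\<lambda>r. r\<^sup>2) ` {0..R} \<subseteq> {0\<^sup>2..R\<^sup>2}" using R0 by (auto intro: power_mono)
    show "continuous_on {0\<^sup>2..R\<^sup>2} f" unfolding f_def
      by (intro continuous_intros continuous_on_compose2[OF c0\<psi>]) (use L0 in auto)
    show "((\<lambda>r. r\<^sup>2) has_real_derivative 2 * x) (at x within {0..R})" for x
      by (auto intro!: derivative_eq_intros)
  qed
  then have step2: "integral {0..R\<^sup>2} f = integral {0..R} (\<lambda>r. (2 * r) *\<^sub>R f (r\<^sup>2))"
    by (simp add: integral_unique)
  define E where "E = (\<lambda>r::real. exp (\<i> * complex_of_real (t * r\<^sup>2)))"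
  define c0 where "c0 = - \<i> / complex_of_real t"
  define F where "F = (\<lambda>r. E r * c0)"
  define f1 where "f1 = (\<lambda>r. complex_of_real (2 * t * r) * \<i> * E r * c0)"
  define w where "w = (\<lambda>r. complex_of_real (sin (a * r) * \<psi> (r / L)))"
  define w' where "w' = (\<lambda>r. complex_of_real (a * cos (a * r) * \<psi> (r / L) + sin (a * r) * (\<psi>1 (r / L) * (1 / L))))"
  have dF: "(F has_vector_derivative f1 x) (at x within {0..R})" for x
    using has_vector_derivative_mult[OF dE[of t x "{0..R}"] has_vector_derivative_const[of c0]]
    unfolding F_def f1_def E_def by simp
  have dw: "(w has_vector_derivative w' x) (at x within {0..R})" for x
  proof -
    have d1: "((\<lambda>r. \<psi> (r / L)) has_real_derivative \<psi>1 (x / L) * (1 / L)) (at x)"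
      by (rule DERIV_chain2[OF d\<psi>]) (use L0 in \<open>auto intro!: derivative_eq_intros\<close>)
    have "((\<lambda>r. sin (a * r) * \<psi> (r / L)) has_real_derivative a * cos (a * x) * \<psi> (x / L) + sin (a * x) * (\<psi>1 (x / L) * (1 / L))) (at x)"
      by (auto intro!: derivative_eq_intros d1)
    then have "((\<lambda>r. sin (a * r) * \<psi> (r / L)) has_real_derivative a * cos (a * x) * \<psi> (x / L) + sin (a * x) * (\<psi>1 (x / L) * (1 / L))) (at x within {0..R})"
      by (simp add: has_field_derivative_at_within)
    from has_vector_derivative_of_real[OF this] show ?thesis unfolding w_def w'_def .
  qed
  have cf1: "continuous_on {0..R} f1" unfolding f1_def E_def by (intro continuous_intros)
  have cw': "continuous_on {0..R} w'" unfolding w'_def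
    using L0 by (intro continuous_intros continuous_on_compose2[OF c1] continuous_on_compose2[OF c0\<psi>]) auto
  have "integral {0..R} (\<lambda>r. (2 * r) *\<^sub>R f (r\<^sup>2)) = integral {0..R} (\<lambda>x. f1 x * w x)"
  proof (rule integral_cong)
    fix x assume x: "x \<in> {0..R}"
    then have sx: "sqrt (x\<^sup>2) = x" by simp
    show "(2 * x) *\<^sub>R f (x\<^sup>2) = f1 x * w x"
      unfolding f_def f1_def w_def E_def c0_def sx using t0
      by (simp add: scaleR_conv_of_real field_simps)
  qed
  also have "\<dots> = F R * w R - F 0 * w 0 - integral {0..R} (\<lambda>x. F x * w' x)"
    by (rule ibp[OF R0 dF dw cf1 cw'])
  also have "F R * w R = 0" unfolding w_def R_def using L0 z3 by simp
  also have "F 0 * w 0 = 0" unfolding w_def by simp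
  finally have eqI: "integral {0..R} (\<lambda>r. (2 * r) *\<^sub>R f (r\<^sup>2)) = - integral {0..R} (\<lambda>x. F x * w' x)" by simp
  define hA where "hA = (\<lambda>x. exp (\<i> * complex_of_real (t * x\<^sup>2 + a * x)) * complex_of_real (\<psi> (x / L)))"
  define hB where "hB = (\<lambda>x. exp (\<i> * complex_of_real (t * x\<^sup>2 + (-a) * x)) * complex_of_real (\<psi> (x / L)))"
  define k where "k = (\<lambda>x. E x * complex_of_real (sin (a * x) * \<psi>1 (x / L) / L))"
  have pw: "F x * w' x = c0 * (complex_of_real a * ((hA x + hB x) / 2) + k x)" for x
  proof -
    have cs: "complex_of_real (cos (a * x)) = (exp (\<i> * complex_of_real (a * x)) + exp (- (\<i> * complex_of_real (a * x)))) / 2"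
      using cos_exp_eq[of "complex_of_real (a * x)"] by (simp only: cos_of_real)
    have e1: "E x * exp (\<i> * complex_of_real (a * x)) = exp (\<i> * complex_of_real (t * x\<^sup>2 + a * x))"
      unfolding E_def mult_exp_exp by (simp add: algebra_simps)
    have e2: "E x * exp (- (\<i> * complex_of_real (a * x))) = exp (\<i> * complex_of_real (t * x\<^sup>2 + (-a) * x))"
      unfolding E_def mult_exp_exp by (simp add: algebra_simps)
    have Ec: "E x * complex_of_real (cos (a * x)) = (exp (\<i> * complex_of_real (t * x\<^sup>2 + a * x)) + exp (\<i> * complex_of_real (t * x\<^sup>2 + (-a) * x))) / 2"
      unfolding cs e1[symmetric] e2[symmetric] by (simp add: algebra_simps)
    have "F x * w' x = c0 * (complex_of_real a * (E x * complex_of_real (cos (a * x))) * complex_of_real (\<psi> (x / L)) + k x)"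
      unfolding F_def w'_def k_def by (simp add: algebra_simps)
    also have "\<dots> = c0 * (complex_of_real a * ((hA x + hB x) / 2) + k x)"
      unfolding Ec hA_def hB_def by (simp add: algebra_simps add_divide_distrib)
    finally show ?thesis .
  qed
  have ihA: "hA integrable_on {0..R}" unfolding hA_def
    using L0 by (intro integrable_continuous_interval continuous_intros continuous_on_compose2[OF c0\<psi>]) auto
  have ihB: "hB integrable_on {0..R}" unfolding hB_def
    using L0 by (intro integrable_continuous_interval continuous_intros continuous_on_compose2[OF c0\<psi>]) auto
  have ik: "k integrable_on {0..R}" unfolding k_def E_def
    using L0 by (intro integrable_continuous_interval continuous_intros continuous_on_compose2[OF c1]) auto
  have "integral {0..R} (\<lambda>x. F x * w' x) = c0 * (complex_of_real a * ((integral {0..R} hA + integral {0..R} hB) / 2) + integral {0..R} k)"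
  proof -
    have "integral {0..R} (\<lambda>x. F x * w' x) = integral {0..R} (\<lambda>x. c0 * (complex_of_real a * ((hA x + hB x) / 2) + k x))"
      unfolding pw ..
    also have "\<dots> = c0 * integral {0..R} (\<lambda>x. complex_of_real a * ((hA x + hB x) / 2) + k x)"
      by (rule integral_mult_right)
    also have "integral {0..R} (\<lambda>x. complex_of_real a * ((hA x + hB x) / 2) + k x)
        = integral {0..R} (\<lambda>x. complex_of_real a * ((hA x + hB x) / 2)) + integral {0..R} k"
      by (rule integral_add) (use ihA ihB ik in \<open>auto intro!: integrable_on_mult_right integrable_add integrable_on_divide\<close>)
    also have "integral {0..R} (\<lambda>x. complex_of_real a * ((hA x + hB x) / 2)) = complex_of_real a * integral {0..R} (\<lambda>x. (hA x + hB x) / 2)"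
      by (rule integral_mult_right)
    also have "integral {0..R} (\<lambda>x. (hA x + hB x) / 2) = integral {0..R} (\<lambda>x. hA x + hB x) / 2"
      by (rule integral_divide)
    also have "integral {0..R} (\<lambda>x. hA x + hB x) = integral {0..R} hA + integral {0..R} hB"
      by (rule integral_add[OF ihA ihB])
    finally show ?thesis .
  qed
  moreover have nA: "norm (integral {0..R} hA) \<le> 18 * M1 / sqrt t"
    unfolding hA_def R_def by (rule partA[OF t0 L0 d\<psi> c1 z3 M1])
  moreover have nB: "norm (integral {0..R} hB) \<le> 18 * M1 / sqrt t"
    unfolding hB_def R_def by (rule partA[OF t0 L0 d\<psi> c1 z3 M1])
  moreover have nk: "norm (integral {0..R} k) \<le> 5/2 * \<bar>a\<bar> * (2 * M1 + M2) / t"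
    unfolding k_def R_def E_def by (rule partB[OF t0 L d\<psi>1 c2 z13 zs M1 M2])
  moreover have nc0: "norm c0 = 1 / t" unfolding c0_def using t0 by (simp add: norm_divide)
  ultimately have bound: "norm (integral {0..R} (\<lambda>x. F x * w' x)) \<le> 1 / t * (\<bar>a\<bar> * (18 * M1 / sqrt t) + 5/2 * \<bar>a\<bar> * (2 * M1 + M2) / t)"
  proof -
    let ?A = "integral {0..R} hA" and ?B = "integral {0..R} hB" and ?K = "integral {0..R} k"
    have "norm ((?A + ?B) / 2) \<le> 18 * M1 / sqrt t"
      using norm_triangle_ineq[of ?A ?B] nA nB by (simp add: norm_divide)
    then have "norm (complex_of_real a * ((?A + ?B) / 2)) \<le> \<bar>a\<bar> * (18 * M1 / sqrt t)"
      unfolding norm_mult norm_of_real by (rule mult_left_mono) simp_all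
    then have "norm (complex_of_real a * ((?A + ?B) / 2) + ?K) \<le> \<bar>a\<bar> * (18 * M1 / sqrt t) + 5/2 * \<bar>a\<bar> * (2 * M1 + M2) / t"
      using norm_triangle_ineq[of "complex_of_real a * ((?A + ?B) / 2)" ?K] nk by linarith
    then show ?thesis
      unfolding \<open>integral {0..R} (\<lambda>x. F x * w' x) = _\<close> norm_mult nc0
      by (rule mult_left_mono) (use t0 in simp)
  qed
  have st1: "1 \<le> sqrt t" using t by simp
  have st3: "sqrt t * sqrt t = t" using t0 by simp
  have "sqrt t * 1 \<le> sqrt t * sqrt t" using st1 by (intro mult_left_mono) auto
  then have st2: "sqrt t \<le> t" using st3 by simp
  note st = st1 st2 st3
  have pw32: "t powr (-3/2) = 1 / (t * sqrt t)"
  proof -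
    have "t powr (3/2) = t powr (1 + 1/2)" by simp
    also have "\<dots> = t powr 1 * t powr (1/2)" by (rule powr_add)
    also have "\<dots> = t * sqrt t" using t0 by (simp add: powr_half_sqrt)
    finally have p32: "t powr (3/2) = t * sqrt t" .
    have "t powr (-3/2) = t powr (-(3/2))" by simp
    also have "\<dots> = inverse (t powr (3/2))" by (rule powr_minus)
    finally show ?thesis unfolding p32 by (simp add: inverse_eq_divide)
  qed
  define X where "X = \<bar>a\<bar> / (t * sqrt t)"
  have X0: "0 \<le> X" unfolding X_def using t0 by simp
  have e1: "1 / t * (\<bar>a\<bar> * (18 * M1 / sqrt t)) = 18 * M1 * X" unfolding X_def by (simp add: field_simps)
  have e2: "1 / t * (5/2 * \<bar>a\<bar> * (2 * M1 + M2) / t) \<le> (5/2 * (2 * M1 + M2)) * X"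
  proof -
    have q: "1 / t * (5/2 * \<bar>a\<bar> * (2 * M1 + M2) / t) = (5/2 * (2 * M1 + M2)) * (\<bar>a\<bar> / (t * t))"
      by (simp add: field_simps)
    have "\<bar>a\<bar> / (t * t) \<le> X" unfolding X_def
    proof (rule divide_left_mono)
      show "t * sqrt t \<le> t * t" using st(2) t0 by (intro mult_left_mono) auto
    qed (use t0 in simp_all)
    then have "(5/2 * (2 * M1 + M2)) * (\<bar>a\<bar> / (t * t)) \<le> (5/2 * (2 * M1 + M2)) * X"
      by (rule mult_left_mono) (use M1p M2p in simp)
    then show ?thesis unfolding q .
  qed
  have "norm (integral {0..} f) \<le> 1 / t * (\<bar>a\<bar> * (18 * M1 / sqrt t) + 5/2 * \<bar>a\<bar> * (2 * M1 + M2) / t)"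
    using bound unfolding step1 step2 eqI norm_minus_cancel .
  also have "\<dots> \<le> 18 * M1 * X + (5/2 * (2 * M1 + M2)) * X" using e1 e2 by (simp add: distrib_left)
  also have "\<dots> \<le> (23 * M1 + 3 * M2) * X" using X0 M2p by (simp add: algebra_simps mult_left_mono)
  also have "\<dots> = (23 * M1 + 3 * M2) * t powr (-3/2) * \<bar>a\<bar>" unfolding X_def pw32 by simp
  finally show ?thesis unfolding f_def .
qed



lemma cont_bound:
  fixes g :: "real \<Rightarrow> real"
  assumes "continuous_on UNIV g"
  shows "\<exists>M. \<forall>x\<in>{0..3}. \<bar>g x\<bar> \<le> M"
proof -
  have "compact (g ` {0..3})"
    by (rule compact_continuous_image[OF continuous_on_subset[OF assms subset_UNIV]]) simp
  then have "bounded (g ` {0..3})" by (rule compact_imp_bounded)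
  then show ?thesis unfolding bounded_real by auto
qed

theorem lemma2p4:
  fixes \<psi> :: "real \<Rightarrow> real"
  assumes smooth: "smooth_real \<psi>"
    and even: "\<And>x. \<psi> (- x) = \<psi> x"
    and one: "\<And>x. -1 \<le> x \<Longrightarrow> x \<le> 1 \<Longrightarrow> \<psi> x = 1"
    and supp: "closure {x. \<psi> x \<noteq> 0} \<subseteq> {-2..2}"
  shows "\<exists>C::real. \<forall>t::real. \<forall>a::real. t \<ge> 1 \<longrightarrow>
           (\<forall>L::real. L \<ge> 1 \<longrightarrow>
              norm (integral {0..} (\<lambda>s::real. exp (\<i> * complex_of_real (t * s))
                    * complex_of_real (sin (a * sqrt s) * \<psi> (sqrt s / L))))
              \<le> C * t powr (-3/2) * \<bar>a\<bar>)"
proof -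
  obtain D :: "nat \<Rightarrow> real \<Rightarrow> real" where D0: "D 0 = \<psi>"
    and dD: "\<And>n x. (D n has_real_derivative D (Suc n) x) (at x)"
    using smooth unfolding smooth_real_def by blast
  have d\<psi>: "(\<psi> has_real_derivative D 1 x) (at x)" for x using dD[of 0 x] D0 by simp
  have d\<psi>1: "(D 1 has_real_derivative D 2 x) (at x)" for x
  proof -
    have e: "Suc 1 = (2::nat)" by simp
    show ?thesis using dD[of 1 x] unfolding e .
  qed
  have c2: "continuous_on UNIV (D 2)"
    using dD[of 2] by (meson DERIV_isCont continuous_at_imp_continuous_on)
  have c1: "continuous_on UNIV (D 1)"
    using d\<psi>1 by (meson DERIV_isCont continuous_at_imp_continuous_on)
  have zbig: "\<psi> x = 0" if "2 < x" for x
  proof (rule ccontr)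
    assume "\<psi> x \<noteq> 0"
    then have "x \<in> {x. \<psi> x \<noteq> 0}" by simp
    then have "x \<in> closure {x. \<psi> x \<noteq> 0}" by (rule closure_subset[THEN subsetD])
    then have "x \<in> {-2..2}" by (rule subsetD[OF supp])
    then show False using that by simp
  qed
  have z13: "D 1 3 = 0"
  proof (rule DERIV_local_const[OF d\<psi>, of 1])
    show "\<forall>y. \<bar>3 - y\<bar> < 1 \<longrightarrow> \<psi> 3 = \<psi> y"
    proof (intro allI impI)
      fix y :: real assume "\<bar>3 - y\<bar> < 1"
      then have "2 < y" by linarith
      then show "\<psi> 3 = \<psi> y" using zbig[of 3] zbig[of y] by simp
    qed
  qed simp
  have zs: "D 1 x = 0" if "0 \<le> x" "x \<le> 1/2" for x
  proof (rule DERIV_local_const[OF d\<psi>, of "1/2"])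
    show "\<forall>y. \<bar>x - y\<bar> < 1/2 \<longrightarrow> \<psi> x = \<psi> y"
    proof (intro allI impI)
      fix y :: real assume "\<bar>x - y\<bar> < 1/2"
      then have "-1 \<le> y" "y \<le> 1" using that by linarith+
      then show "\<psi> x = \<psi> y" using one[of x] one[of y] that by simp
    qed
  qed simp
  obtain M1 where M1: "\<And>x. x \<in> {0..3} \<Longrightarrow> \<bar>D 1 x\<bar> \<le> M1" using cont_bound[OF c1] by blast
  obtain M2 where M2: "\<And>x. x \<in> {0..3} \<Longrightarrow> \<bar>D 2 x\<bar> \<le> M2" using cont_bound[OF c2] by blast
  show ?thesis
  proof (rule exI[of _ "23 * M1 + 3 * M2"], intro allI impI)
    fix t a L :: real assume "1 \<le> t" "1 \<le> L"
    then show "norm (integral {0..} (\<lambda>s::real. exp (\<i> * complex_of_real (t * s))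
                    * complex_of_real (sin (a * sqrt s) * \<psi> (sqrt s / L))))
              \<le> (23 * M1 + 3 * M2) * t powr (-3/2) * \<bar>a\<bar>"
      by (rule mainbound[OF _ _ d\<psi> d\<psi>1 c2 zbig z13 zs M1 M2])
  qed
qed

end
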